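(* Let $(\Delta,\mathcal H)$ be a generic cut and $K_\Delta,K_+,K_-$ the associated simplicial complexes on $\widetilde{[m]}=[m]\cup\{o\}$ as defined below. Then $$K_+\cap K_-=\operatorname{star}_{K_+\cup K_-}(o)=\operatorname{star}_{K_+}(o)=\operatorname{star}_{K_-}(o),$$ $$(K_+\cup K_-)\setminus K_\Delta=O_{K_+\cup K_-}(o)=O_{K_+}(o)=O_{K_-}(o).$$
   Context: Let $\Delta\subset\mathbb R^n$ be an $n$-dimensional simple polytope $\Delta=\{x:\langle x,\lambda_i\rangle+\eta_i\ge0,\ i=1,\dots,m\}$ (bounding hyperplanes in general position), whose facets $H_i=\Delta\cap\{\langle x,\lambda_i\rangle+\eta_i=0\}$ are all nonempty. A generic cut is a hyperplane $\mathcal H=\{\langle x,\lambda_0\rangle+\xi=0\}$ such that $\mathcal H$ and the hyperplanes $\{\langle x,\lambda_i\rangle+\eta_i=0\}$ are in general position and $H_o:=\mathcal H\cap\Delta\ne\varnothing$. Set $\Delta_+=\Delta\cap\{\langle x,\lambda_0\rangle+\xi\ge0\}$, $\Delta_-=\Delta\cap\{\langle x,\lambda_0\rangle+\xi\le0\}$. Define simplicial complexes on $\widetilde{[m]}$: $K_\Delta=\{\sigma\subset[m]:\bigcap_{i\in\sigma}H_i\ne\varnothing\}\cup\{\varnothing\}$, $K_\pm=\{\sigma\subset\widetilde{[m]}:\bigcap_{i\in\sigma}(H_i\cap\Delta_\pm)\ne\varnothing\}\cup\{\varnothing\}$ (with $H_o$ the facet indexed by $o$). For a simplicial complex $K$ and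 a vertex $o$: $O_K(o)=\{\sigma\in K: o\in\sigma\}$, and $\operatorname{star}_K(o)$ is its closure, i.e. the set of all subsets of faces of $K$ containing $o$. *)

theory Defs
  imports "HOL-Analysis.Analysis"
begin

text \<open>Index conventions: the facet labels of the cut polytopes live in \<open>nat option\<close>;
  \<open>Some i\<close> (for \<open>i \<in> {1..m}\<close>) is the label \<open>i \<in> [m]\<close> and \<open>None\<close> is the new label \<open>o\<close>.\<close>

definition hyperplane :: "('i \<Rightarrow> 'a::euclidean_space) \<Rightarrow> ('i \<Rightarrow> real) \<Rightarrow> 'i \<Rightarrow> 'a set" where
  "hyperplane L E i = {x. L i \<bullet> x + E i = 0}"

definition general_position :: "('i \<Rightarrow> 'a::euclidean_space) \<Rightarrow> ('i \<Rightarrow> real) \<Rightarrow> 'i set \<Rightarrow> bool" where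
  "general_position L E I \<longleftrightarrow>
     (\<forall>\<sigma>. \<sigma> \<subseteq> I \<and> \<sigma> \<noteq> {} \<and> (\<Inter>i\<in>\<sigma>. hyperplane L E i) \<noteq> {} \<longrightarrow>
          inj_on L \<sigma> \<and> independent (L ` \<sigma>))"

definition polytope_of :: "nat \<Rightarrow> (nat \<Rightarrow> 'a::euclidean_space) \<Rightarrow> (nat \<Rightarrow> real) \<Rightarrow> 'a set" where
  "polytope_of m lam eta = {x. \<forall>i\<in>{1..m}. lam i \<bullet> x + eta i \<ge> 0}"

definition poly_facet :: "nat \<Rightarrow> (nat \<Rightarrow> 'a::euclidean_space) \<Rightarrow> (nat \<Rightarrow> real) \<Rightarrow> nat \<Rightarrow> 'a set" where
  "poly_facet m lam eta i = polytope_of m lam eta \<inter> {x. lam i \<bullet> x + eta i = 0}"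

definition simple_polytope :: "nat \<Rightarrow> (nat \<Rightarrow> 'a::euclidean_space) \<Rightarrow> (nat \<Rightarrow> real) \<Rightarrow> bool" where
  "simple_polytope m lam eta \<longleftrightarrow>
     (\<forall>v. v extreme_point_of polytope_of m lam eta \<longrightarrow>
        card {i\<in>{1..m}. v \<in> poly_facet m lam eta i} = DIM('a))"

definition ext_normal :: "(nat \<Rightarrow> 'a) \<Rightarrow> 'a \<Rightarrow> nat option \<Rightarrow> 'a" where
  "ext_normal lam l0 j = (case j of None \<Rightarrow> l0 | Some i \<Rightarrow> lam i)"

definition ext_offset :: "(nat \<Rightarrow> real) \<Rightarrow> real \<Rightarrow> nat option \<Rightarrow> real" where
  "ext_offset eta xi j = (case j of None \<Rightarrow> xi | Some i \<Rightarrow> eta i)"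

definition ext_index :: "nat \<Rightarrow> nat option set" where
  "ext_index m = insert None (Some ` {1..m})"

definition generic_cut ::
  "nat \<Rightarrow> (nat \<Rightarrow> 'a::euclidean_space) \<Rightarrow> (nat \<Rightarrow> real) \<Rightarrow> 'a \<Rightarrow> real \<Rightarrow> bool" where
  "generic_cut m lam eta l0 xi \<longleftrightarrow>
     general_position (ext_normal lam l0) (ext_offset eta xi) (ext_index m) \<and>
     polytope_of m lam eta \<inter> {x. l0 \<bullet> x + xi = 0} \<noteq> {}"

definition half_plus :: "'a::euclidean_space \<Rightarrow> real \<Rightarrow> 'a set" where
  "half_plus l0 xi = {x. l0 \<bullet> x + xi \<ge> 0}"

definition half_minus :: "'a::euclidean_space \<Rightarrow> real \<Rightarrow> 'a set" where
  "half_minus l0 xi = {x. l0 \<bullet> x + xi \<le> 0}"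

definition ext_facet ::
  "nat \<Rightarrow> (nat \<Rightarrow> 'a::euclidean_space) \<Rightarrow> (nat \<Rightarrow> real) \<Rightarrow> 'a \<Rightarrow> real \<Rightarrow> nat option \<Rightarrow> 'a set" where
  "ext_facet m lam eta l0 xi j =
     (case j of None \<Rightarrow> polytope_of m lam eta \<inter> {x. l0 \<bullet> x + xi = 0}
              | Some i \<Rightarrow> poly_facet m lam eta i)"

definition K_Delta :: "nat \<Rightarrow> (nat \<Rightarrow> 'a::euclidean_space) \<Rightarrow> (nat \<Rightarrow> real) \<Rightarrow> nat option set set" where
  "K_Delta m lam eta =
     {Some ` \<sigma> | \<sigma>. \<sigma> \<subseteq> {1..m} \<and> (\<Inter>i\<in>\<sigma>. poly_facet m lam eta i) \<noteq> {}} \<union> {{}}"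

definition K_plus ::
  "nat \<Rightarrow> (nat \<Rightarrow> 'a::euclidean_space) \<Rightarrow> (nat \<Rightarrow> real) \<Rightarrow> 'a \<Rightarrow> real \<Rightarrow> nat option set set" where
  "K_plus m lam eta l0 xi =
     {\<sigma>. \<sigma> \<subseteq> ext_index m \<and>
          (\<Inter>j\<in>\<sigma>. ext_facet m lam eta l0 xi j \<inter> half_plus l0 xi) \<noteq> {}} \<union> {{}}"

definition K_minus ::
  "nat \<Rightarrow> (nat \<Rightarrow> 'a::euclidean_space) \<Rightarrow> (nat \<Rightarrow> real) \<Rightarrow> 'a \<Rightarrow> real \<Rightarrow> nat option set set" where
  "K_minus m lam eta l0 xi =
     {\<sigma>. \<sigma> \<subseteq> ext_index m \<and>
          (\<Inter>j\<in>\<sigma>. ext_facet m lam eta l0 xi j \<inter> half_minus l0 xi) \<noteq> {}} \<union> {{}}"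

definition open_star_at :: "'v set set \<Rightarrow> 'v \<Rightarrow> 'v set set" where
  "open_star_at K v = {\<sigma>\<in>K. v \<in> \<sigma>}"

definition star_at :: "'v set set \<Rightarrow> 'v \<Rightarrow> 'v set set" where
  "star_at K v = {\<tau>. \<exists>\<sigma>\<in>K. v \<in> \<sigma> \<and> \<tau> \<subseteq> \<sigma>}"

end

theory Submission
  imports Defs
begin

lemma convex_polytope_of: "convex (polytope_of m lam eta)"
proof -
  have "polytope_of m lam eta = (\<Inter>i\<in>{1..m}. {x. - eta i \<le> lam i \<bullet> x})"
  proof (rule set_eqI, rule iffI)
    fix x assume a: "x \<in> polytope_of m lam eta"
    { fix i assume "i \<in> {1..m}"
      hence "lam i \<bullet> x + eta i \<ge> 0" using a unfolding polytope_of_def by blast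
      hence "- eta i \<le> lam i \<bullet> x" by linarith }
    thus "x \<in> (\<Inter>i\<in>{1..m}. {x. - eta i \<le> lam i \<bullet> x})" by blast
  next
    fix x assume a: "x \<in> (\<Inter>i\<in>{1..m}. {x. - eta i \<le> lam i \<bullet> x})"
    { fix i assume "i \<in> {1..m}"
      hence "- eta i \<le> lam i \<bullet> x" using a by blast
      hence "lam i \<bullet> x + eta i \<ge> 0" by linarith }
    thus "x \<in> polytope_of m lam eta" unfolding polytope_of_def by blast
  qed
  thus ?thesis by (auto intro!: convex_INT convex_halfspace_ge)
qed

lemma convex_hp: "convex {x::'a::euclidean_space. a \<bullet> x + b = 0}"
proof -
  have "{x::'a. a \<bullet> x + b = 0} = {x. a \<bullet> x = - b}" by auto
  thus ?thesis by (simp add: convex_hyperplane)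
qed

lemma convex_F: "convex (ext_facet m lam eta l0 xi j)"
  by (cases j) (auto simp: ext_facet_def poly_facet_def
      intro!: convex_Int convex_polytope_of convex_hp)

lemma F_sub: "ext_facet m lam eta l0 xi j \<subseteq> polytope_of m lam eta"
  by (cases j) (auto simp: ext_facet_def poly_facet_def)

lemma Kp_eq: "K_plus m lam eta l0 xi = {\<sigma>. \<sigma> \<subseteq> ext_index m \<and>
          (\<Inter>j\<in>\<sigma>. ext_facet m lam eta l0 xi j \<inter> half_plus l0 xi) \<noteq> {}}"
  unfolding K_plus_def by auto

lemma Km_eq: "K_minus m lam eta l0 xi = {\<sigma>. \<sigma> \<subseteq> ext_index m \<and>
          (\<Inter>j\<in>\<sigma>. ext_facet m lam eta l0 xi j \<inter> half_minus l0 xi) \<noteq> {}}"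
  unfolding K_minus_def by auto


lemma cross_pm:
  assumes "None \<in> \<sigma>" "\<sigma> \<in> K_plus m lam eta l0 xi"
  shows "\<sigma> \<in> K_minus m lam eta l0 xi"
proof -
  from assms obtain x where x: "x \<in> (\<Inter>j\<in>\<sigma>. ext_facet m lam eta l0 xi j \<inter> half_plus l0 xi)"
    and s: "\<sigma> \<subseteq> ext_index m" unfolding Kp_eq by auto
  have "x \<in> ext_facet m lam eta l0 xi None" using assms x by blast
  hence z: "l0 \<bullet> x + xi = 0" by (simp add: ext_facet_def)
  have "x \<in> (\<Inter>j\<in>\<sigma>. ext_facet m lam eta l0 xi j \<inter> half_minus l0 xi)"
  proof -
    have "x \<in> half_minus l0 xi" using z by (simp add: half_minus_def)
    thus ?thesis using x by blast
  qed
  thus ?thesis using s unfolding Km_eq by blast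
qed

lemma cross_mp:
  assumes "None \<in> \<sigma>" "\<sigma> \<in> K_minus m lam eta l0 xi"
  shows "\<sigma> \<in> K_plus m lam eta l0 xi"
proof -
  from assms obtain x where x: "x \<in> (\<Inter>j\<in>\<sigma>. ext_facet m lam eta l0 xi j \<inter> half_minus l0 xi)"
    and s: "\<sigma> \<subseteq> ext_index m" unfolding Km_eq by auto
  have "x \<in> ext_facet m lam eta l0 xi None" using assms x by blast
  hence z: "l0 \<bullet> x + xi = 0" by (simp add: ext_facet_def)
  have "x \<in> (\<Inter>j\<in>\<sigma>. ext_facet m lam eta l0 xi j \<inter> half_plus l0 xi)"
  proof -
    have "x \<in> half_plus l0 xi" using z by (simp add: half_plus_def)
    thus ?thesis using x by blast
  qed
  thus ?thesis using s unfolding Kp_eq by blast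
qed

lemma down_p: "\<sigma> \<in> K_plus m lam eta l0 xi \<Longrightarrow> \<tau> \<subseteq> \<sigma> \<Longrightarrow> \<tau> \<in> K_plus m lam eta l0 xi"
  unfolding Kp_eq by blast

lemma down_m: "\<sigma> \<in> K_minus m lam eta l0 xi \<Longrightarrow> \<tau> \<subseteq> \<sigma> \<Longrightarrow> \<tau> \<in> K_minus m lam eta l0 xi"
  unfolding Km_eq by blast

lemma ins_None:
  assumes "polytope_of m lam eta \<inter> {x. l0 \<bullet> x + xi = 0} \<noteq> {}"
    and p: "\<sigma> \<in> K_plus m lam eta l0 xi" and mm: "\<sigma> \<in> K_minus m lam eta l0 xi"
  shows "insert None \<sigma> \<in> K_plus m lam eta l0 xi"
proof (cases "\<sigma> = {}")
  case True
  then obtain x where "x \<in> polytope_of m lam eta \<inter> {x. l0 \<bullet> x + xi = 0}" using assms(1) by blast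
  then have "x \<in> (\<Inter>j\<in>{None}. ext_facet m lam eta l0 xi j \<inter> half_plus l0 xi)"
    by (auto simp: ext_facet_def half_plus_def)
  then show ?thesis using True unfolding Kp_eq ext_index_def by auto
next
  case False
  define F where "F = ext_facet m lam eta l0 xi"
  from p obtain x where x: "x \<in> (\<Inter>j\<in>\<sigma>. F j \<inter> half_plus l0 xi)"
    and s: "\<sigma> \<subseteq> ext_index m" unfolding Kp_eq F_def by auto
  from mm obtain y where y: "y \<in> (\<Inter>j\<in>\<sigma>. F j \<inter> half_minus l0 xi)"
    unfolding Km_eq F_def by auto
  define S where "S = (\<Inter>j\<in>\<sigma>. F j)"
  have cS: "convex S" unfolding S_def F_def by (auto intro!: convex_INT convex_F)
  have xS: "x \<in> S" and yS: "y \<in> S" using x y unfolding S_def by blast+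
  define a where "a = l0 \<bullet> x + xi"
  define b where "b = l0 \<bullet> y + xi"
  have a: "a \<ge> 0" using False x unfolding a_def half_plus_def by auto
  have b: "b \<le> 0" using False y unfolding b_def half_minus_def by auto
  obtain z where zS: "z \<in> S" and z0: "l0 \<bullet> z + xi = 0"
  proof (cases "a = 0")
    case True then show ?thesis using that xS a_def by auto
  next
    case False
    define t where "t = a / (a - b)"
    have ab: "a - b > 0" using a b False by auto
    have t0: "0 \<le> t" and t1: "t \<le> 1" using a b ab unfolding t_def by (auto simp: divide_simps)
    define z where "z = (1 - t) *\<^sub>R x + t *\<^sub>R y"
    have "z \<in> S" using cS xS yS t0 t1 unfolding z_def convex_alt by auto
    moreover have "l0 \<bullet> z + xi = (1 - t) * a + t * b"
      unfolding z_def a_def b_def by (simp add: inner_add_right algebra_simps)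
    moreover have "(1 - t) * a + t * b = 0"
      using ab unfolding t_def by (simp add: field_simps)
    ultimately show ?thesis using that by auto
  qed
  obtain j0 where j0: "j0 \<in> \<sigma>" using False by auto
  have "z \<in> polytope_of m lam eta" using zS j0 F_sub[of m lam eta l0 xi j0] unfolding S_def F_def by auto
  hence "z \<in> F None" using z0 unfolding F_def ext_facet_def by auto
  hence "z \<in> (\<Inter>j\<in>insert None \<sigma>. F j \<inter> half_plus l0 xi)"
    using zS z0 unfolding S_def half_plus_def by auto
  moreover have "insert None \<sigma> \<subseteq> ext_index m" using s unfolding ext_index_def by blast
  ultimately show ?thesis unfolding Kp_eq F_def by blast
qed

lemma to_KD:
  assumes "None \<notin> \<sigma>" "\<sigma> \<subseteq> ext_index m"
    "x \<in> (\<Inter>j\<in>\<sigma>. ext_facet m lam eta l0 xi j \<inter> H)"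
  shows "\<sigma> \<in> K_Delta m lam eta"
proof -
  define s where "s = {i. Some i \<in> \<sigma>}"
  have e: "\<sigma> = Some ` s" unfolding s_def using assms(1)
    by (auto simp: image_iff) (metis not_None_eq)
  have "s \<subseteq> {1..m}" using assms(2) unfolding s_def ext_index_def by auto
  moreover have "\<forall>i\<in>s. x \<in> ext_facet m lam eta l0 xi (Some i)"
    using assms(3) unfolding s_def by blast
  hence "x \<in> (\<Inter>i\<in>s. poly_facet m lam eta i)"
    unfolding ext_facet_def by simp
  ultimately show ?thesis unfolding K_Delta_def e by blast
qed

lemma KD_None: "None \<in> \<sigma> \<Longrightarrow> \<sigma> \<notin> K_Delta m lam eta"
  unfolding K_Delta_def by auto

theorem lemma3p8:
  fixes m :: nat and lam :: "nat \<Rightarrow> 'a::euclidean_space" and eta :: "nat \<Rightarrow> real"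
    and l0 :: 'a and xi :: real
  assumes "bounded (polytope_of m lam eta)"
    and "aff_dim (polytope_of m lam eta) = int DIM('a)"
    and "simple_polytope m lam eta"
    and "general_position lam eta {1..m}"
    and "\<forall>i\<in>{1..m}. poly_facet m lam eta i \<noteq> {}"
    and "generic_cut m lam eta l0 xi"
  defines "KD \<equiv> K_Delta m lam eta"
    and "Kp \<equiv> K_plus m lam eta l0 xi"
    and "Km \<equiv> K_minus m lam eta l0 xi"
  shows "Kp \<inter> Km = star_at (Kp \<union> Km) None \<and>
         star_at (Kp \<union> Km) None = star_at Kp None \<and>
         star_at Kp None = star_at Km None \<and>
         (Kp \<union> Km) - KD = open_star_at (Kp \<union> Km) None \<and>
         open_star_at (Kp \<union> Km) None = open_star_at Kp None \<and>
         open_star_at Kp None = open_star_at Km None"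
proof -
  have H: "polytope_of m lam eta \<inter> {x. l0 \<bullet> x + xi = 0} \<noteq> {}"
    using assms(6) unfolding generic_cut_def by auto
  have pm: "\<And>\<sigma>. None \<in> \<sigma> \<Longrightarrow> \<sigma> \<in> Kp \<longleftrightarrow> \<sigma> \<in> Km"
    unfolding Kp_def Km_def using cross_pm cross_mp by blast
  have dp: "\<And>\<sigma> \<tau>. \<sigma> \<in> Kp \<Longrightarrow> \<tau> \<subseteq> \<sigma> \<Longrightarrow> \<tau> \<in> Kp" unfolding Kp_def by (rule down_p)
  have dm: "\<And>\<sigma> \<tau>. \<sigma> \<in> Km \<Longrightarrow> \<tau> \<subseteq> \<sigma> \<Longrightarrow> \<tau> \<in> Km" unfolding Km_def by (rule down_m)
  have ins: "\<And>\<sigma>. \<sigma> \<in> Kp \<Longrightarrow> \<sigma> \<in> Km \<Longrightarrow> insert None \<sigma> \<in> Kp"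
    unfolding Kp_def Km_def using ins_None[OF H] by blast
  have kd: "\<sigma> \<in> KD" if a: "\<sigma> \<in> Kp \<union> Km" and b: "None \<notin> \<sigma>" for \<sigma>
  proof (cases "\<sigma> \<in> Kp")
    case True
    then have c: "\<sigma> \<subseteq> ext_index m \<and>
       (\<Inter>j\<in>\<sigma>. ext_facet m lam eta l0 xi j \<inter> half_plus l0 xi) \<noteq> {}"
      unfolding Kp_def Kp_eq by (rule CollectD)
    then obtain x where "x \<in> (\<Inter>j\<in>\<sigma>. ext_facet m lam eta l0 xi j \<inter> half_plus l0 xi)"
      by (meson ex_in_conv)
    from to_KD[OF b conjunct1[OF c] this] show ?thesis unfolding KD_def .
  next
    case False
    then have "\<sigma> \<in> Km" using a by blast
    then have c: "\<sigma> \<subseteq> ext_index m \<and>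
       (\<Inter>j\<in>\<sigma>. ext_facet m lam eta l0 xi j \<inter> half_minus l0 xi) \<noteq> {}"
      unfolding Km_def Km_eq by (rule CollectD)
    then obtain x where "x \<in> (\<Inter>j\<in>\<sigma>. ext_facet m lam eta l0 xi j \<inter> half_minus l0 xi)"
      by (meson ex_in_conv)
    from to_KD[OF b conjunct1[OF c] this] show ?thesis unfolding KD_def .
  qed
  have kn: "\<And>\<sigma>. None \<in> \<sigma> \<Longrightarrow> \<sigma> \<notin> KD" unfolding KD_def by (rule KD_None)
  have os1: "open_star_at (Kp \<union> Km) None = open_star_at Kp None"
    unfolding open_star_at_def using pm by blast
  have os2: "open_star_at Kp None = open_star_at Km None"
    unfolding open_star_at_def using pm by blast
  have ss1: "star_at (Kp \<union> Km) None = star_at Kp None"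
    unfolding star_at_def using pm by blast
  have ss2: "star_at Kp None = star_at Km None"
    unfolding star_at_def using pm by blast
  have st: "Kp \<inter> Km = star_at (Kp \<union> Km) None"
  proof
    show "Kp \<inter> Km \<subseteq> star_at (Kp \<union> Km) None"
    proof
      fix \<sigma> assume "\<sigma> \<in> Kp \<inter> Km"
      hence "insert None \<sigma> \<in> Kp" using ins by blast
      thus "\<sigma> \<in> star_at (Kp \<union> Km) None" unfolding star_at_def by blast
    qed
    show "star_at (Kp \<union> Km) None \<subseteq> Kp \<inter> Km"
    proof
      fix \<tau> assume "\<tau> \<in> star_at (Kp \<union> Km) None"
      then obtain \<sigma> where s: "\<sigma> \<in> Kp \<union> Km" "None \<in> \<sigma>" "\<tau> \<subseteq> \<sigma>"
        unfolding star_at_def by blast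
      hence "\<sigma> \<in> Kp" "\<sigma> \<in> Km" using pm by blast+
      thus "\<tau> \<in> Kp \<inter> Km" using dp dm s(3) by blast
    qed
  qed
  have od: "(Kp \<union> Km) - KD = open_star_at (Kp \<union> Km) None"
    unfolding open_star_at_def using kd kn by blast
  show ?thesis using os1 os2 ss1 ss2 st od by simp
qed

end
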